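(* Under Friends Appreciation, consider instances with $n$ agents in which every agent has at least one friend. Let $\textsf{RandAlgo}_\alpha$ be the randomized algorithm that with probability $\alpha$ outputs $\textsf{WeaklyConn}(\mathcal{I})$ and with probability $1-\alpha$ outputs $\textsf{OneWeaklyConn}(\mathcal{I})$. Then for every such instance $\mathcal{I}$ there exists $\alpha\in[0,1]$ (depending on $\mathcal{I}$) such that $$\frac{\mathrm{opt}(\mathcal{I})}{\min_{i\in\mathcal{N}}\mathbb{E}[u_i(\textsf{RandAlgo}_\alpha(\mathcal{I}))]}\le 2-\frac{5}{n+3}.$$
   Context: A friends-and-enemies instance $\mathcal{I}$ consists of a set of agents $\mathcal{N}=\{1,\dots,n\}$ and, for each agent $i$, a set of friends $F_i\subseteq \mathcal{N}\setminus\{i\}$; the enemies of $i$ are $E_i=\mathcal{N}\setminus(F_i\cup\{i\})$. An outcome is a partition $\pi$ of $\mathcal{N}$. Under Friends Appreciation, $u_i(C)=|C\cap F_i|-\frac{1}{n}|C\cap E_i|$ for $C\ni i$, $u_i(\pi)$ is $i$'s utility for her coalition in $\pi$, $\mathsf{ESW}(\pi)=\min_iu_i(\pi)$, and $\mathrm{opt}(\mathcal{I})$ is the maximum $\mathsf{ESW}$ over all partitions. The friendship graph $G^f$ is the directed graph on $\mathcal{N}$ with an arc $(i,j)$ iff $j\in F_i$. $\textsf{WeaklyConn}(\mathcal{I})$ is the partition of $\mathcal{N}$ into the vertex sets of the weakly connected components of $G^f$. With $\mathcal{N}_1=\{i:|F_i|=1\}$, $\textsf{OneWeaklyConn}(\mathcal{I})$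 is the partition of $\mathcal{N}$ into the vertex sets of the weakly connected components of the directed graph $(\mathcal{N},\{(i,j): i\in\mathcal{N}_1, j\in F_i\})$. *)

theory Defs
  imports Main "HOL-Library.Disjoint_Sets" Complex_Main
begin

definition agents :: "nat \<Rightarrow> nat set" where
  "agents n = {1..n}"

definition enemies :: "nat \<Rightarrow> (nat \<Rightarrow> nat set) \<Rightarrow> nat \<Rightarrow> nat set" where
  "enemies n F i = agents n - (F i \<union> {i})"

definition util :: "nat \<Rightarrow> (nat \<Rightarrow> nat set) \<Rightarrow> nat \<Rightarrow> nat set \<Rightarrow> real" where
  "util n F i C = real (card (C \<inter> F i)) - (1 / real n) * real (card (C \<inter> enemies n F i))"

definition coalition_of :: "nat set set \<Rightarrow> nat \<Rightarrow> nat set" where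
  "coalition_of P i = (THE C. C \<in> P \<and> i \<in> C)"

definition util_part :: "nat \<Rightarrow> (nat \<Rightarrow> nat set) \<Rightarrow> nat \<Rightarrow> nat set set \<Rightarrow> real" where
  "util_part n F i P = util n F i (coalition_of P i)"

definition ESW :: "nat \<Rightarrow> (nat \<Rightarrow> nat set) \<Rightarrow> nat set set \<Rightarrow> real" where
  "ESW n F P = Min ((\<lambda>i. util_part n F i P) ` agents n)"

definition opt :: "nat \<Rightarrow> (nat \<Rightarrow> nat set) \<Rightarrow> real" where
  "opt n F = Max (ESW n F ` {P. partition_on (agents n) P})"

definition weak_components :: "nat set \<Rightarrow> (nat \<times> nat) set \<Rightarrow> nat set set" where
  "weak_components V A = {{y \<in> V. (x, y) \<in> (A \<union> A\<inverse>)\<^sup>*} | x. x \<in> V}"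

definition friend_arcs :: "nat \<Rightarrow> (nat \<Rightarrow> nat set) \<Rightarrow> (nat \<times> nat) set" where
  "friend_arcs n F = {(i, j). i \<in> agents n \<and> j \<in> F i}"

definition one_friend_arcs :: "nat \<Rightarrow> (nat \<Rightarrow> nat set) \<Rightarrow> (nat \<times> nat) set" where
  "one_friend_arcs n F = {(i, j). i \<in> agents n \<and> card (F i) = 1 \<and> j \<in> F i}"

definition WeaklyConn :: "nat \<Rightarrow> (nat \<Rightarrow> nat set) \<Rightarrow> nat set set" where
  "WeaklyConn n F = weak_components (agents n) (friend_arcs n F)"

definition OneWeaklyConn :: "nat \<Rightarrow> (nat \<Rightarrow> nat set) \<Rightarrow> nat set set" where
  "OneWeaklyConn n F = weak_components (agents n) (one_friend_arcs n F)"

definition exp_util_rand :: "nat \<Rightarrow> (nat \<Rightarrow> nat set) \<Rightarrow> real \<Rightarrow> nat \<Rightarrow> real" where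
  "exp_util_rand n F \<alpha> i =
     \<alpha> * util_part n F i (WeaklyConn n F) + (1 - \<alpha>) * util_part n F i (OneWeaklyConn n F)"

end

theory Submission
  imports Defs
begin

lemma fin_agents: "finite (agents n)" by (simp add: agents_def)

lemma card_agents: "card (agents n) = n" by (simp add: agents_def)

lemma util_formula:
  assumes C: "C \<subseteq> agents n" and iC: "i \<in> C" and Fi: "F i \<subseteq> agents n - {i}"
  shows "util n F i C = real (card (C \<inter> F i)) - (real (card C) - 1 - real (card (C \<inter> F i))) / real n"
proof -
  have fin: "finite C" using C fin_agents finite_subset by blast
  have dec: "C = ((C \<inter> enemies n F i) \<union> (C \<inter> F i)) \<union> {i}"
    using C iC by (auto simp: enemies_def)
  have d1: "(C \<inter> enemies n F i) \<inter> (C \<inter> F i) = {}" by (auto simp: enemies_def)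
  have d2: "((C \<inter> enemies n F i) \<union> (C \<inter> F i)) \<inter> {i} = {}" using Fi by (auto simp: enemies_def)
  have "card C = card ((C \<inter> enemies n F i) \<union> (C \<inter> F i)) + card {i}"
    using fin d2 by (subst dec, intro card_Un_disjoint) auto
  also have "card ((C \<inter> enemies n F i) \<union> (C \<inter> F i)) = card (C \<inter> enemies n F i) + card (C \<inter> F i)"
    using fin d1 by (intro card_Un_disjoint) auto
  finally have "card C = card (C \<inter> enemies n F i) + card (C \<inter> F i) + 1" by simp
  then have "real (card (C \<inter> enemies n F i)) = real (card C) - 1 - real (card (C \<inter> F i))" by simp
  then show ?thesis by (simp add: util_def)
qed

lemma util_le: "util n F i C \<le> real (card (C \<inter> F i))"
  by (simp add: util_def)

lemma coalition_of_part:
  assumes P: "partition_on V P" and X: "X \<in> P" and iX: "i \<in> X"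
  shows "coalition_of P i = X"
  unfolding coalition_of_def
proof (rule the_equality)
  show "X \<in> P \<and> i \<in> X" using X iX by simp
  fix C assume "C \<in> P \<and> i \<in> C"
  then show "C = X" using P X iX unfolding partition_on_def disjoint_def by blast
qed

lemma coalition_of_part2:
  assumes P: "partition_on V P" and i: "i \<in> V"
  shows "coalition_of P i \<in> P \<and> i \<in> coalition_of P i \<and> coalition_of P i \<subseteq> V"
proof -
  obtain X where X: "X \<in> P" "i \<in> X" using P i unfolding partition_on_def by blast
  then show ?thesis using coalition_of_part[OF P X] P unfolding partition_on_def by blast
qed

lemma sym_rt:
  assumes "(x, y) \<in> (A \<union> A\<inverse>)\<^sup>*"
  shows "(y, x) \<in> (A \<union> A\<inverse>)\<^sup>*"
proof -
  have "(y, x) \<in> ((A \<union> A\<inverse>)\<inverse>)\<^sup>*" using assms by (simp add: rtrancl_converseI)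
  moreover have "(A \<union> A\<inverse>)\<inverse> = A \<union> A\<inverse>" by auto
  ultimately show ?thesis by simp
qed

lemma coalition_of_wc:
  assumes i: "i \<in> V"
  shows "coalition_of (weak_components V A) i = {y \<in> V. (i, y) \<in> (A \<union> A\<inverse>)\<^sup>*}"
  unfolding coalition_of_def
proof (rule the_equality)
  show "{y \<in> V. (i, y) \<in> (A \<union> A\<inverse>)\<^sup>*} \<in> weak_components V A \<and> i \<in> {y \<in> V. (i, y) \<in> (A \<union> A\<inverse>)\<^sup>*}"
    using i unfolding weak_components_def by blast
  fix C assume C: "C \<in> weak_components V A \<and> i \<in> C"
  then obtain x where x: "x \<in> V" "C = {y \<in> V. (x, y) \<in> (A \<union> A\<inverse>)\<^sup>*}"
    unfolding weak_components_def by blast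
  have xi: "(x, i) \<in> (A \<union> A\<inverse>)\<^sup>*" using C x by blast
  have ix: "(i, x) \<in> (A \<union> A\<inverse>)\<^sup>*" using sym_rt[OF xi] .
  show "C = {y \<in> V. (i, y) \<in> (A \<union> A\<inverse>)\<^sup>*}"
    using x xi ix by (auto intro: rtrancl_trans)
qed

lemma aux_g:
  fixes G N p :: real assumes "G \<le> 1" "N > 0"
  shows "G * (N+1) - p + 1 \<le> N + 2 - p"
proof -
  have "G * (N+1) \<le> 1 * (N+1)" using assms by (intro mult_right_mono) auto
  then show ?thesis by simp
qed

lemma ar_all:
  fixes N x :: real assumes N: "N \<ge> 2" and x: "0 < x" "x \<le> N"
  defines "\<alpha> \<equiv> ((2*N+1)*N - (N-2)*x) / ((2*N+1)*(2*N+3-x))"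
  shows "0 \<le> \<alpha>" "\<alpha> \<le> 1"
    "(N+3)/(2*N+1)*(x/N) \<le> \<alpha>*(2/N) + (1-\<alpha>)*(x/N)"
    "(N+3)/(2*N+1)*(x/N) \<le> \<alpha>*((N+3)/N) + (1-\<alpha>)*(x/N - 1)"
proof -
  define K where "K = (2*N+1)*N - (N-2)*x"
  define D where "D = (2*N+1)*(2*N+3-x)"
  have Dp: "D > 0" unfolding D_def using N x by (intro mult_pos_pos) auto
  have a: "\<alpha> = K / D" unfolding \<alpha>_def K_def D_def ..
  have "(N-2)*x \<le> (N-2)*N" using N x by (intro mult_left_mono) auto
  moreover have "(N-2)*N \<le> (2*N+1)*N" using N by (intro mult_right_mono) auto
  ultimately have Kp: "K \<ge> 0" unfolding K_def by linarith
  have "D - K = (N+3)*(2*N+1-x)" unfolding D_def K_def by (simp add: algebra_simps)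
  also have "\<dots> \<ge> 0" using N x by (intro mult_nonneg_nonneg) auto
  finally have KD: "K \<le> D" by simp
  show "0 \<le> \<alpha>" unfolding a using Kp Dp by simp
  show "\<alpha> \<le> 1" unfolding a using KD Dp by simp
  have Np: "N > 0" using N by simp
  have s: "(N+3)/(2*N+1) = 1 - (N-2)/(2*N+1)" using N by (simp add: field_simps)
  have key: "K*(x-2) \<le> (N-2)*x*(2*N+3-x)"
  proof -
    have "K*(x-2) - (N-2)*x*(2*N+3-x) = (2*N+1)*(2*x-2*N)"
      unfolding K_def by (simp add: algebra_simps)
    also have "\<dots> \<le> 0" using N x by (intro mult_nonneg_nonpos) auto
    finally show ?thesis by simp
  qed
  have "\<alpha>*(x-2) = K*(x-2)/D" unfolding a by simp
  also have "\<dots> \<le> (N-2)*x*(2*N+3-x)/D" using key Dp by (intro divide_right_mono) auto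
  also have "\<dots> = (N-2)/(2*N+1)*x"
  proof -
    have "2*N+3-x \<noteq> 0" "2*N+1 \<noteq> 0" using N x by auto
    then have "(N-2)*x*(2*N+3-x)/((2*N+1)*(2*N+3-x)) = ((N-2)*x)/(2*N+1)"
      by (metis nonzero_mult_divide_mult_cancel_right)
    then show ?thesis unfolding D_def by simp
  qed
  finally have k1: "\<alpha>*(x-2) \<le> (N-2)/(2*N+1)*x" .
  have e1: "\<alpha>*(2/N) + (1-\<alpha>)*(x/N) = (x - \<alpha>*(x-2))/N" using Np by (simp add: field_simps)
  have "(N+3)/(2*N+1)*x \<le> x - \<alpha>*(x-2)" using k1 unfolding s by (simp add: algebra_simps)
  then have "(N+3)/(2*N+1)*x/N \<le> (x - \<alpha>*(x-2))/N" using Np by (intro divide_right_mono) auto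
  then show "(N+3)/(2*N+1)*(x/N) \<le> \<alpha>*(2/N) + (1-\<alpha>)*(x/N)" unfolding e1 by simp
  have e2: "\<alpha>*((N+3)/N) + (1-\<alpha>)*(x/N - 1) = (x - N + \<alpha>*(2*N+3-x))/N" using Np by (simp add: field_simps)
  have "\<alpha>*(2*N+3-x) = K/(2*N+1)"
  proof -
    have c: "2*N+3-x \<noteq> 0" "2*N+1 \<noteq> 0" using N x by auto
    show ?thesis unfolding a D_def using c by simp
  qed
  also have "\<dots> = N - (N-2)/(2*N+1)*x" unfolding K_def using N by (simp add: field_simps)
  finally have "x - N + \<alpha>*(2*N+3-x) = (N+3)/(2*N+1)*x" unfolding s by (simp add: algebra_simps)
  then show "(N+3)/(2*N+1)*(x/N) \<le> \<alpha>*((N+3)/N) + (1-\<alpha>)*(x/N - 1)" unfolding e2 by simp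
qed

lemma ar_k2:
  fixes N f :: real assumes "N \<ge> 2" "f \<ge> 2"
  shows "(N+3)/(2*N+1)*f \<le> f*(N+1)/N - (N-1)/N"
proof -
  have "(N+3)*f*N \<le> (2*N+1)*(f*(N+1) - (N-1))"
  proof -
    have "(2*N+1)*(f*(N+1) - (N-1)) - (N+3)*f*N = f*(N*N+1) - (2*N*N - N - 1)" by (simp add: algebra_simps)
    moreover have "f*(N*N+1) \<ge> 2*(N*N+1)" using assms by (intro mult_right_mono) auto
    moreover have "2*(N*N+1) \<ge> 2*N*N - N - 1" using assms by simp
    ultimately show ?thesis by linarith
  qed
  have Np: "N > 0" using assms by simp
  have nz: "2*N+1 \<noteq> 0" "N \<noteq> 0" using assms by auto
  have e1: "(N+3)/(2*N+1)*f = (N+3)*f*N/((2*N+1)*N)" using nz by simp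
  have e2: "f*(N+1)/N - (N-1)/N = (2*N+1)*(f*(N+1) - (N-1))/((2*N+1)*N)" using nz by (simp add: diff_divide_distrib)
  show ?thesis unfolding e1 e2 using \<open>(N+3)*f*N \<le> _\<close> Np assms by (intro divide_right_mono) auto
qed

lemma ar_final:
  fixes N m q :: real assumes "N \<ge> 2" "m > 0" "(N+3)/(2*N+1)*q \<le> m"
  shows "q/m \<le> 2 - 5/(N+3)"
proof -
  have e: "2 - 5/(N+3) = (2*N+1)/(N+3)" using assms by (simp add: field_simps)
  have "q \<le> m*((2*N+1)/(N+3))" using assms by (simp add: field_simps)
  then show ?thesis unfolding e using assms by (simp add: divide_le_eq mult.commute)
qed

theorem theorem7:
  fixes n :: nat and F :: "nat \<Rightarrow> nat set"
  assumes n_pos: "n \<ge> 1"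
    and friends_valid: "\<forall>i \<in> agents n. F i \<subseteq> agents n - {i}"
    and has_friend: "\<forall>i \<in> agents n. F i \<noteq> {}"
  shows "\<exists>\<alpha>::real. 0 \<le> \<alpha> \<and> \<alpha> \<le> 1 \<and>
           (let m = Min ((\<lambda>i. exp_util_rand n F \<alpha> i) ` agents n)
            in 0 < m \<and> opt n F / m \<le> 2 - 5 / (real n + 3))"
proof -
  let ?V = "agents n"
  define A where "A = one_friend_arcs n F"
  define B where "B = friend_arcs n F"
  define CO where "CO i = {y \<in> ?V. (i, y) \<in> (A \<union> A\<inverse>)\<^sup>*}" for i
  define CW where "CW i = {y \<in> ?V. (i, y) \<in> (B \<union> B\<inverse>)\<^sup>*}" for i
  define a where "a i = util n F i (CW i)" for i
  define b where "b i = util n F i (CO i)" for i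
  define N where "N = real n"
  define \<rho> where "\<rho> = (N+3)/(2*N+1)"
  have V1: "1 \<in> ?V" using n_pos by (simp add: agents_def)
  obtain f1 where "f1 \<in> F 1" using has_friend V1 by blast
  then have "f1 \<in> ?V" "f1 \<noteq> 1" using friends_valid V1 by auto
  then have n2: "n \<ge> 2" by (auto simp: agents_def)
  then have N2: "N \<ge> 2" unfolding N_def by simp
  have Np: "N > 0" using N2 by simp
  have \<rho>p: "\<rho> > 0" unfolding \<rho>_def using N2 by simp
  have finV: "finite ?V" by (rule fin_agents)
  have Vne: "?V \<noteq> {}" using V1 by blast
  have E: "exp_util_rand n F \<alpha> i = \<alpha> * a i + (1-\<alpha>) * b i" if "i \<in> ?V" for \<alpha> i
    using that by (simp add: exp_util_rand_def util_part_def WeaklyConn_def OneWeaklyConn_def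
        coalition_of_wc A_def B_def CO_def CW_def a_def b_def)
  have finF: "finite (F i)" if "i \<in> ?V" for i
    using that friends_valid finV finite_subset by blast
  have cardF: "card (F i) \<ge> 1" if "i \<in> ?V" for i
    using that finF has_friend by (simp add: Suc_le_eq card_gt_0_iff)
  have FCW: "F i \<subseteq> CW i" if "i \<in> ?V" for i
    using that friends_valid unfolding CW_def B_def friend_arcs_def by blast
  have iCW: "i \<in> CW i" "CW i \<subseteq> ?V" if "i \<in> ?V" for i using that unfolding CW_def by auto
  have iCO: "i \<in> CO i" "CO i \<subseteq> ?V" if "i \<in> ?V" for i using that unfolding CO_def by auto
  have cardV: "card (C) \<le> n" if "C \<subseteq> ?V" for C
    using card_mono[OF finV that] card_agents by metis
  have a_eq: "a i = real (card (F i)) - (real (card (CW i)) - 1 - real (card (F i))) / N" if "i \<in> ?V" for i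
  proof -
    have "CW i \<inter> F i = F i" using FCW[OF that] by blast
    then show ?thesis unfolding a_def N_def
      using util_formula[OF iCW(2)[OF that] iCW(1)[OF that]] friends_valid that by simp
  qed
  have a_lb: "a i \<ge> real (card (F i)) * (N+1)/N - (N-1)/N" if "i \<in> ?V" for i
  proof -
    have "real (card (CW i)) \<le> N" using cardV[OF iCW(2)[OF that]] unfolding N_def by simp
    then have "(real (card (CW i)) - 1 - real (card (F i))) / N \<le> (N - 1 - real (card (F i))) / N"
      using Np by (intro divide_right_mono) auto
    then show ?thesis unfolding a_eq[OF that] using Np by (simp add: field_simps)
  qed
  have a_pos: "a i \<ge> 2/N" if "i \<in> ?V" for i
  proof -
    have "real (card (F i)) * (N+1)/N \<ge> 1 * (N+1)/N"
      using cardF[OF that] Np by (intro divide_right_mono mult_right_mono) auto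
    moreover have "(N+1)/N - (N-1)/N = 2/N" by (simp add: diff_divide_distrib[symmetric])
    ultimately show ?thesis using a_lb[OF that] by simp
  qed
  have finP: "finite {P. partition_on ?V P}" by (rule finitely_many_partition_on[OF finV])
  have neP: "{P. partition_on ?V P} \<noteq> {}" using partition_on_space[OF Vne] by blast
  have "opt n F \<in> ESW n F ` {P. partition_on ?V P}"
    unfolding opt_def using finP neP by (intro Max_in) auto
  then obtain \<pi> where \<pi>: "partition_on ?V \<pi>" and opt_eq: "opt n F = ESW n F \<pi>" by blast
  define q where "q = opt n F"
  define PP where "PP i = coalition_of \<pi> i" for i
  have PPp: "PP i \<in> \<pi>" "i \<in> PP i" "PP i \<subseteq> ?V" if "i \<in> ?V" for i
    using coalition_of_part2[OF \<pi> that] unfolding PP_def by auto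
  have q_le: "q \<le> util n F i (PP i)" if "i \<in> ?V" for i
    unfolding q_def opt_eq ESW_def util_part_def PP_def using finV that by (intro Min_le) auto
  have PP_eq: "PP y = PP x" if "x \<in> ?V" "y \<in> PP x" for x y
    unfolding PP_def using coalition_of_part[OF \<pi> PPp(1)[OF that(1)] that(2)] PP_def by simp
  have util_PP: "util n F i (PP i) = real (card (PP i \<inter> F i)) - (real (card (PP i)) - 1 - real (card (PP i \<inter> F i))) / N"
    if "i \<in> ?V" for i
    unfolding N_def using util_formula[OF PPp(3)[OF that] PPp(2)[OF that]] friends_valid that by simp
  have suff: "?thesis" if al: "0 \<le> \<alpha>" "\<alpha> \<le> 1"
    and lb: "\<And>i. i \<in> ?V \<Longrightarrow> \<rho> * q \<le> \<alpha> * a i + (1-\<alpha>) * b i"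
    and pos: "\<And>i. i \<in> ?V \<Longrightarrow> 0 < \<alpha> * a i + (1-\<alpha>) * b i" for \<alpha>
  proof -
    define m where "m = Min ((\<lambda>i. exp_util_rand n F \<alpha> i) ` ?V)"
    have "m \<in> (\<lambda>i. exp_util_rand n F \<alpha> i) ` ?V" unfolding m_def using finV Vne by (intro Min_in) auto
    then have mpos: "m > 0" using pos E by auto
    have "\<rho> * q \<le> m" unfolding m_def using finV Vne lb E by (subst Min_ge_iff) auto
    then have "q / m \<le> 2 - 5 / (N + 3)" using ar_final[OF N2 mpos] unfolding \<rho>_def by simp
    then show ?thesis using al mpos unfolding m_def q_def N_def Let_def by blast
  qed
  show ?thesis
  proof (cases "q \<le> 0 \<or> (\<forall>i \<in> ?V. card (F i) \<noteq> 1)")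
    case True
    show ?thesis
    proof (rule suff[of 1])
      fix i assume i: "i \<in> ?V"
      have "0 < 2/N" using Np by simp
      then have "0 < a i" using a_pos[OF i] by linarith
      then show "0 < 1 * a i + (1 - 1) * b i" by simp
      show "\<rho> * q \<le> 1 * a i + (1 - 1) * b i"
      proof (cases "q \<le> 0")
        case True
        then have "\<rho> * q \<le> 0" using \<rho>p by (simp add: mult_nonneg_nonpos)
        moreover have "0 < 2/N" using Np by simp
        ultimately have "\<rho> * q \<le> a i" using a_pos[OF i] by linarith
        then show ?thesis by simp
      next
        case False
        then have "card (F i) \<noteq> 1" using \<open>q \<le> 0 \<or> _\<close> i by blast
        then have c2: "card (F i) \<ge> 2" using cardF[OF i] by simp
        have "q \<le> real (card (PP i \<inter> F i))" using q_le[OF i] util_le by (rule order_trans)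
        also have "\<dots> \<le> real (card (F i))" using finF[OF i] by (simp add: card_mono)
        finally have "\<rho> * q \<le> \<rho> * real (card (F i))" using \<rho>p by simp
        also have "\<dots> \<le> real (card (F i)) * (N+1)/N - (N-1)/N"
          unfolding \<rho>_def using ar_k2[OF N2] c2 by simp
        also have "\<dots> \<le> a i" using a_lb[OF i] .
        finally show ?thesis by simp
      qed
    qed (auto)
  next
    case False
    then have qp: "q > 0" and "\<exists>j0 \<in> ?V. card (F j0) = 1" by auto
    then obtain j0 where j0: "j0 \<in> ?V" "card (F j0) = 1" by blast
    have arcA: "x \<in> ?V \<and> y \<in> ?V \<and> card (F x) = 1 \<and> F x = {y}" if "(x, y) \<in> A" for x y
    proof -
      have x: "x \<in> ?V" "card (F x) = 1" "y \<in> F x" using that unfolding A_def one_friend_arcs_def by auto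
      then show ?thesis using friends_valid by (auto simp: card_1_singleton_iff)
    qed
    have arc_PP: "PP y = PP x" if "(x, y) \<in> A" for x y
    proof -
      have x: "x \<in> ?V" "y \<in> ?V" "F x = {y}" using arcA[OF that] by auto
      have "y \<in> PP x"
      proof (rule ccontr)
        assume "y \<notin> PP x"
        then have "PP x \<inter> F x = {}" using x by auto
        then have "util n F x (PP x) \<le> 0" using util_le[of n F x "PP x"] by simp
        then show False using q_le[OF x(1)] qp by simp
      qed
      then show ?thesis using PP_eq[OF x(1)] by simp
    qed
    have closure: "y \<in> ?V \<and> PP y = PP x" if "(x, y) \<in> (A \<union> A\<inverse>)\<^sup>*" "x \<in> ?V" for x y
      using that(1)
    proof (induction rule: rtrancl_induct)
      case base then show ?case using that(2) by simp
    next
      case (step y z)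
      then show ?case using arcA arc_PP by auto
    qed
    have COsub: "CO i \<subseteq> PP i" if "i \<in> ?V" for i
    proof
      fix y assume "y \<in> CO i"
      then have "(i, y) \<in> (A \<union> A\<inverse>)\<^sup>*" "y \<in> ?V" unfolding CO_def by auto
      then show "y \<in> PP i" using closure[OF _ that] PPp(2) by metis
    qed
    have finPP: "finite (PP i)" if "i \<in> ?V" for i using PPp(3)[OF that] finV finite_subset by blast
    have cardCO: "card (CO i) \<le> card (PP i)" if "i \<in> ?V" for i
      using card_mono[OF finPP[OF that] COsub[OF that]] .
    have b_eq: "b i = real (card (CO i \<inter> F i)) - (real (card (CO i)) - 1 - real (card (CO i \<inter> F i))) / N"
      if "i \<in> ?V" for i
      unfolding b_def N_def using util_formula[OF iCO(2)[OF that] iCO(1)[OF that]] friends_valid that by simp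
    have PP_ub: "util n F i (PP i) \<le> (N + 2 - real (card (PP i))) / N" if "i \<in> ?V" "card (F i) = 1" for i
    proof -
      have "card (PP i \<inter> F i) \<le> 1" using card_mono[OF finF[OF that(1)], of "PP i \<inter> F i"] that by auto
      then have "real (card (PP i \<inter> F i)) \<le> 1" by simp
      then have g: "real (card (PP i \<inter> F i)) * (N+1) \<le> 1 * (N+1)"
        using Np by (metis less_eq_real_def mult_right_mono add_pos_pos zero_less_one)
      have e: "util n F i (PP i) = (real (card (PP i \<inter> F i)) * (N+1) - real (card (PP i)) + 1) / N"
        unfolding util_PP[OF that(1)] using Np by (simp add: field_simps)
      show ?thesis unfolding e
      proof (rule divide_right_mono)
        show "real (card (PP i \<inter> F i)) * (N+1) - real (card (PP i)) + 1 \<le> N + 2 - real (card (PP i))"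
          using aux_g[OF \<open>real (card (PP i \<inter> F i)) \<le> 1\<close> Np] .
      qed (use Np in auto)
    qed
    have N1: "q \<le> b j \<and> b j \<le> 1" if j: "j \<in> ?V" "card (F j) = 1" for j
    proof -
      obtain f where f: "F j = {f}" using j by (auto simp: card_1_singleton_iff)
      have fA: "(j, f) \<in> A" unfolding A_def one_friend_arcs_def using j f by auto
      then have fCO: "f \<in> CO j" unfolding CO_def using arcA by auto
      have "f \<noteq> j" using friends_valid j f by auto
      then have "{j, f} \<subseteq> CO j" using fCO iCO[OF j(1)] by auto
      then have "card {j, f} \<le> card (CO j)" using card_mono[OF finite_subset[OF iCO(2)[OF j(1)] finV]] by blast
      then have c2: "card (CO j) \<ge> 2" using \<open>f \<noteq> j\<close> by simp
      have "CO j \<inter> F j = {f}" using f fCO by auto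
      then have bj: "b j = (N + 2 - real (card (CO j))) / N" unfolding b_eq[OF j(1)] using Np by (simp add: field_simps)
      have "q \<le> (N + 2 - real (card (PP j))) / N" using q_le[OF j(1)] PP_ub[OF j] by simp
      also have "\<dots> \<le> b j" unfolding bj using cardCO[OF j(1)] Np by (intro divide_right_mono) auto
      finally have "q \<le> b j" .
      moreover have "b j \<le> 1" unfolding bj using c2 Np by (simp add: field_simps)
      ultimately show ?thesis by simp
    qed
    have q1: "q \<le> 1" using N1[OF j0] by simp
    have N2b: "q - 1 \<le> b i" if i: "i \<in> ?V" "card (F i) \<noteq> 1" for i
    proof -
      have finCO: "finite (CO i)" using iCO(2)[OF i(1)] finV finite_subset by blast
      have b_lb: "b i \<ge> - (real (card (CO i)) - 1) / N"
        unfolding b_eq[OF i(1)] using Np by (simp add: field_simps)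
      show ?thesis
      proof (cases "PP i = CO i")
        case True
        then show ?thesis using q_le[OF i(1)] unfolding b_def by simp
      next
        case neq: False
        show ?thesis
        proof (cases "CO i = {i}")
          case True
          then have "b i \<ge> 0" using b_lb by simp
          then show ?thesis using q1 by simp
        next
          case False
          then obtain y where y: "y \<in> CO i" "y \<noteq> i" using iCO(1)[OF i(1)] by blast
          then have "(i, y) \<in> (A \<union> A\<inverse>)\<^sup>*" unfolding CO_def by simp
          then obtain z where z: "(i, z) \<in> A \<union> A\<inverse>" "(z, y) \<in> (A \<union> A\<inverse>)\<^sup>*"
            using y(2) by (metis converse_rtranclE)
          have "(i, z) \<notin> A" using arcA i(2) by blast
          then have zA: "(z, i) \<in> A" using z(1) by auto
          then have zz: "z \<in> ?V" "card (F z) = 1" using arcA by auto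
          have "(i, z) \<in> (A \<union> A\<inverse>)\<^sup>*" using zA by auto
          then have "PP z = PP i" using closure i(1) by blast
          then have "q \<le> (N + 2 - real (card (PP i))) / N" using q_le[OF zz(1)] PP_ub[OF zz] by simp
          moreover have "card (CO i) < card (PP i)"
            using psubset_card_mono[OF finPP[OF i(1)]] COsub[OF i(1)] neq by blast
          ultimately have "q \<le> (N + 1 - real (card (CO i))) / N"
          proof -
            have "real (card (CO i)) + 1 \<le> real (card (PP i))" using \<open>card (CO i) < card (PP i)\<close> by linarith
            then have "(N + 2 - real (card (PP i))) / N \<le> (N + 1 - real (card (CO i))) / N"
              using Np by (intro divide_right_mono) auto
            then show ?thesis using \<open>q \<le> (N + 2 - real (card (PP i))) / N\<close> by linarith
          qed
          moreover have "(N + 1 - real (card (CO i))) / N - 1 = - (real (card (CO i)) - 1) / N"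
            using Np by (simp add: field_simps)
          ultimately show ?thesis using b_lb by linarith
        qed
      qed
    qed
    have N2a: "a i \<ge> (N+3)/N" if i: "i \<in> ?V" "card (F i) \<noteq> 1" for i
    proof -
      have "card (F i) \<ge> 2" using cardF[OF i(1)] i(2) by simp
      then have "real (card (F i)) * (N+1)/N \<ge> 2 * (N+1)/N"
        using Np by (intro divide_right_mono mult_right_mono) auto
      moreover have "2*(N+1)/N - (N-1)/N = (N+3)/N" by (simp add: diff_divide_distrib[symmetric])
      ultimately show ?thesis using a_lb[OF i(1)] by linarith
    qed
    define x where "x = N * q"
    have x: "0 < x" "x \<le> N" unfolding x_def using qp q1 Np by (auto simp: mult_le_cancel_left1)
    have qx: "q = x / N" unfolding x_def using Np by simp
    define \<alpha> where "\<alpha> = ((2*N+1)*N - (N-2)*x) / ((2*N+1)*(2*N+3-x))"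
    note AR = ar_all[OF N2 x, folded \<alpha>_def]
    have main: "\<rho> * q \<le> \<alpha> * a i + (1-\<alpha>) * b i" if i: "i \<in> ?V" for i
    proof (cases "card (F i) = 1")
      case True
      have "\<alpha> * (2/N) + (1-\<alpha>) * q \<le> \<alpha> * a i + (1-\<alpha>) * b i"
        using AR(1,2) a_pos[OF i] N1[OF i True] by (intro add_mono mult_left_mono) auto
      then show ?thesis using AR(3) unfolding \<rho>_def qx by simp
    next
      case False
      have "\<alpha> * ((N+3)/N) + (1-\<alpha>) * (q - 1) \<le> \<alpha> * a i + (1-\<alpha>) * b i"
        using AR(1,2) N2a[OF i False] N2b[OF i False] by (intro add_mono mult_left_mono) auto
      then show ?thesis using AR(4) unfolding \<rho>_def qx by simp
    qed
    show ?thesis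
    proof (rule suff[of \<alpha>])
      show "0 \<le> \<alpha>" "\<alpha> \<le> 1" using AR by auto
      fix i assume i: "i \<in> ?V"
      show "\<rho> * q \<le> \<alpha> * a i + (1-\<alpha>) * b i" using main[OF i] .
      have "0 < \<rho> * q" using \<rho>p qp by simp
      then show "0 < \<alpha> * a i + (1-\<alpha>) * b i" using main[OF i] by linarith
    qed
  qed
qed

end
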